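(* Let $d \ge 1$, and for $i \in \{1,2\}$ let $G_i$ be a finite graph with a port numbering $\pi^i$ and a distinguished node $u_i$. Let $\Gamma_i = V(N_d(u_i)) \setminus \{u_i\}$ and let $\mathcal{F}_i$ be any family of subsets of $\Gamma_i$ that contains every singleton $\{v\}$, $v \in \Gamma_i$. If the $d$-hop neighborhoods $N_d(u_1)$ and $N_d(u_2)$ are not isomorphic as rooted graphs (rooted at $u_1$, $u_2$), then $$\{\, \tau_d^{G_1}(u_1; S) : S \in \mathcal{F}_1 \,\} \;\neq\; \{\, \tau_d^{G_2}(u_2; S) : S \in \mathcal{F}_2 \,\}.$$
   Context: A port numbering of a graph $G$ assigns to every node $v$ a bijection $\pi_v$ from the set of neighbors of $v$ to $\{1, \dots, \deg_G(v)\}$. Given $S \subseteq V(G)$ (the set of dropped nodes in a run) and a node $v \notin S$, the depth-$k$ port view $\tau_k^G(v;S)$ is defined recursively: $\tau_0^G(v;S) = \deg_G(v)$, and for $k \ge 1$, $\tau_k^G(v;S) = \big(\deg_G(v), (m_1, \dots, m_{\deg_G(v)})\big)$ where, if $w$ is the neighbor with $\pi_v(w) = j$, then $m_j = \bot$ if $w \in S$ (a dropped node sends no message), and $m_j = \big(\pi_w(v), \tau_{k-1}^G(w;S)\big)$ otherwise. This is the information a node $v$ gathers in $k$ rounds of message passing with port numbers in a run of a dropout GNN in which exactly the nodes of $S$ are dropped. The $d$-hop neighborhood $N_d(u)$ is the graph on all nodes at distance at most $d$ from $u$, containing all edges of $G$ among these nodes except those whose both endpoints are at distance exactly $d$ from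 $u$. The hypothesis that $\mathcal{F}_i$ contains all singletons expresses that every $1$-dropout of the neighborhood of $u_i$ is observed in at least one run (the "$1$-complete" setting); other dropout sets may be observed as well. *)

theory Defs
  imports Main
begin

definition finite_graph :: "'a set \<Rightarrow> ('a \<Rightarrow> 'a \<Rightarrow> bool) \<Rightarrow> bool" where
  "finite_graph V E \<longleftrightarrow> finite V \<and> (\<forall>v w. E v w \<longrightarrow> v \<in> V \<and> w \<in> V)
     \<and> (\<forall>v w. E v w \<longrightarrow> E w v) \<and> (\<forall>v. \<not> E v v)"

definition nbrs :: "('a \<Rightarrow> 'a \<Rightarrow> bool) \<Rightarrow> 'a \<Rightarrow> 'a set" where
  "nbrs E v = {w. E v w}"

definition deg :: "('a \<Rightarrow> 'a \<Rightarrow> bool) \<Rightarrow> 'a \<Rightarrow> nat" where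
  "deg E v = card (nbrs E v)"

definition port_numbering :: "'a set \<Rightarrow> ('a \<Rightarrow> 'a \<Rightarrow> bool) \<Rightarrow> ('a \<Rightarrow> 'a \<Rightarrow> nat) \<Rightarrow> bool" where
  "port_numbering V E \<pi> \<longleftrightarrow> (\<forall>v\<in>V. bij_betw (\<pi> v) (nbrs E v) {1..deg E v})"

definition port_nbr :: "('a \<Rightarrow> 'a \<Rightarrow> bool) \<Rightarrow> ('a \<Rightarrow> 'a \<Rightarrow> nat) \<Rightarrow> 'a \<Rightarrow> nat \<Rightarrow> 'a" where
  "port_nbr E \<pi> v j = (THE w. E v w \<and> \<pi> v w = j)"

text \<open>Port views: depth 0 is just a degree; depth k+1 is a degree together with the list
of messages m_1..m_deg, each either Bot (dropped neighbour) or (back-port, view).\<close>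

datatype pview = PLeaf nat | PNode nat "pmsg list"
     and pmsg = Bot | Msg nat pview

fun tau :: "('a \<Rightarrow> 'a \<Rightarrow> bool) \<Rightarrow> ('a \<Rightarrow> 'a \<Rightarrow> nat) \<Rightarrow> 'a set \<Rightarrow> nat \<Rightarrow> 'a \<Rightarrow> pview" where
  "tau E \<pi> S 0 v = PLeaf (deg E v)"
| "tau E \<pi> S (Suc k) v =
     PNode (deg E v)
       (map (\<lambda>j. let w = port_nbr E \<pi> v j in
                   if w \<in> S then Bot else Msg (\<pi> w v) (tau E \<pi> S k w))
            [1..<deg E v + 1])"

fun reach :: "('a \<Rightarrow> 'a \<Rightarrow> bool) \<Rightarrow> nat \<Rightarrow> 'a \<Rightarrow> 'a \<Rightarrow> bool" where
  "reach E 0 u v = (u = v)"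
| "reach E (Suc k) u v = (reach E k u v \<or> (\<exists>w. reach E k u w \<and> E w v))"

definition hop_nodes :: "('a \<Rightarrow> 'a \<Rightarrow> bool) \<Rightarrow> 'a \<Rightarrow> nat \<Rightarrow> 'a set" where
  "hop_nodes E u d = {v. reach E d u v}"

definition at_dist :: "('a \<Rightarrow> 'a \<Rightarrow> bool) \<Rightarrow> 'a \<Rightarrow> nat \<Rightarrow> 'a \<Rightarrow> bool" where
  "at_dist E u d v \<longleftrightarrow> reach E d u v \<and> (d = 0 \<or> \<not> reach E (d - 1) u v)"

definition hop_edge :: "('a \<Rightarrow> 'a \<Rightarrow> bool) \<Rightarrow> 'a \<Rightarrow> nat \<Rightarrow> 'a \<Rightarrow> 'a \<Rightarrow> bool" where
  "hop_edge E u d v w \<longleftrightarrow> E v w \<and> v \<in> hop_nodes E u d \<and> w \<in> hop_nodes E u d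
     \<and> \<not> (at_dist E u d v \<and> at_dist E u d w)"

definition rooted_iso ::
  "'a set \<Rightarrow> ('a \<Rightarrow> 'a \<Rightarrow> bool) \<Rightarrow> 'a \<Rightarrow> 'b set \<Rightarrow> ('b \<Rightarrow> 'b \<Rightarrow> bool) \<Rightarrow> 'b \<Rightarrow> bool" where
  "rooted_iso V1 E1 r1 V2 E2 r2 \<longleftrightarrow>
     (\<exists>f. bij_betw f V1 V2 \<and> f r1 = r2 \<and> (\<forall>v\<in>V1. \<forall>w\<in>V1. E1 v w \<longleftrightarrow> E2 (f v) (f w)))"

end

theory Submission
  imports Defs
begin


datatype posk = NoP | BotP | MsgP

fun atv :: "pview \<Rightarrow> nat list \<Rightarrow> posk" where
  "atv T [] = MsgP"
| "atv (PLeaf n) (j#js) = NoP"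
| "atv (PNode n ms) (j#js) = (if 1 \<le> j \<and> j \<le> length ms then
     (case ms!(j-1) of Bot \<Rightarrow> (if js = [] then BotP else NoP) | Msg b T' \<Rightarrow> atv T' js) else NoP)"

fun stat :: "('a \<Rightarrow> 'a \<Rightarrow> bool) \<Rightarrow> ('a \<Rightarrow> 'a \<Rightarrow> nat) \<Rightarrow> 'a set \<Rightarrow> nat \<Rightarrow> 'a \<Rightarrow> nat list \<Rightarrow> posk" where
  "stat E \<pi> S k x [] = MsgP"
| "stat E \<pi> S 0 x (j#js) = NoP"
| "stat E \<pi> S (Suc k) x (j#js) = (if 1 \<le> j \<and> j \<le> deg E x then
     (if port_nbr E \<pi> x j \<in> S then (if js = [] then BotP else NoP)
      else stat E \<pi> S k (port_nbr E \<pi> x j) js) else NoP)"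

fun valid :: "('a \<Rightarrow> 'a \<Rightarrow> bool) \<Rightarrow> ('a \<Rightarrow> 'a \<Rightarrow> nat) \<Rightarrow> 'a \<Rightarrow> nat list \<Rightarrow> bool" where
  "valid E \<pi> x [] = True"
| "valid E \<pi> x (j#js) = (1 \<le> j \<and> j \<le> deg E x \<and> valid E \<pi> (port_nbr E \<pi> x j) js)"

fun wend :: "('a \<Rightarrow> 'a \<Rightarrow> bool) \<Rightarrow> ('a \<Rightarrow> 'a \<Rightarrow> nat) \<Rightarrow> 'a \<Rightarrow> nat list \<Rightarrow> 'a" where
  "wend E \<pi> x [] = x"
| "wend E \<pi> x (j#js) = wend E \<pi> (port_nbr E \<pi> x j) js"

lemma nth_map_upt1: "1 \<le> j \<Longrightarrow> j \<le> n \<Longrightarrow> (map f [1..<n+1]) ! (j-1) = f j"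
  by (subst nth_map) (auto simp del: upt_Suc)

lemma atv_tau: "atv (tau E \<pi> S k x) p = stat E \<pi> S k x p"
proof (induction p arbitrary: k x)
  case Nil
  then show ?case by (cases k) auto
next
  case (Cons j js)
  then show ?case by (cases k) (auto simp: Let_def nth_map_upt1 simp del: upt_Suc)
qed

lemma valid_snoc: "valid E \<pi> x (p @ [j]) \<longleftrightarrow> valid E \<pi> x p \<and> 1 \<le> j \<and> j \<le> deg E (wend E \<pi> x p)"
  by (induction p arbitrary: x) auto

lemma wend_snoc: "wend E \<pi> x (p @ [j]) = port_nbr E \<pi> (wend E \<pi> x p) j"
  by (induction p arbitrary: x) auto

lemma valid_take: "valid E \<pi> x p \<Longrightarrow> valid E \<pi> x (take i p)"
  by (induction p arbitrary: x i) (auto simp: take_Cons split: nat.splits)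

lemma L1: "stat E \<pi> S k x p \<noteq> NoP \<Longrightarrow> valid E \<pi> x p \<and> length p \<le> k"
proof (induction p arbitrary: k x)
  case Nil then show ?case by simp
next
  case (Cons j js)
  then show ?case by (cases k) (auto split: if_splits)
qed

lemma L2: "stat E \<pi> S k x p \<noteq> NoP \<Longrightarrow> p \<noteq> [] \<Longrightarrow> (stat E \<pi> S k x p = BotP \<longleftrightarrow> wend E \<pi> x p \<in> S)"
proof (induction p arbitrary: k x)
  case Nil then show ?case by simp
next
  case (Cons j js)
  then show ?case by (cases k; cases js) (auto split: if_splits)
qed

lemma L3: "valid E \<pi> x p \<Longrightarrow> length p \<le> k \<Longrightarrow>
   (\<forall>i. 0 < i \<and> i < length p \<longrightarrow> wend E \<pi> x (take i p) \<notin> S) \<Longrightarrow> stat E \<pi> S k x p \<noteq> NoP"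
proof (induction p arbitrary: k x)
  case Nil then show ?case by simp
next
  case (Cons j js)
  then obtain k' where k: "k = Suc k'" by (cases k) auto
  show ?case
  proof (cases js)
    case Nil
    then show ?thesis using Cons.prems k by auto
  next
    case (Cons j' js')
    have w: "port_nbr E \<pi> x j \<notin> S" using Cons.prems(3)[rule_format, of 1] \<open>js = _\<close> by simp
    have "\<forall>i. 0 < i \<and> i < length js \<longrightarrow> wend E \<pi> (port_nbr E \<pi> x j) (take i js) \<notin> S"
    proof (intro allI impI)
      fix i assume "0 < i \<and> i < length js"
      then show "wend E \<pi> (port_nbr E \<pi> x j) (take i js) \<notin> S"
        using Cons.prems(3)[rule_format, of "Suc i"] by simp
    qed
    then have "stat E \<pi> S k' (port_nbr E \<pi> x j) js \<noteq> NoP"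
      using Cons.IH[of "port_nbr E \<pi> x j" k'] Cons.prems k by auto
    then show ?thesis using k w Cons.prems by auto
  qed
qed

lemma stat_cases: "stat E \<pi> S k x p = NoP \<or> stat E \<pi> S k x p = BotP \<or> stat E \<pi> S k x p = MsgP"
  by (cases "stat E \<pi> S k x p") auto



definition Wv :: "pview set \<Rightarrow> nat list set" where
  "Wv Vs = {p. \<exists>T\<in>Vs. atv T p \<noteq> NoP}"
definition Dv :: "pview set \<Rightarrow> nat list \<Rightarrow> nat list \<Rightarrow> bool" where
  "Dv Vs p q \<longleftrightarrow> (\<exists>T\<in>Vs. (atv T p = BotP \<and> atv T q = MsgP) \<or> (atv T q = BotP \<and> atv T p = MsgP))"
definition Geov :: "pview set \<Rightarrow> nat list \<Rightarrow> bool" where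
  "Geov Vs p \<longleftrightarrow> p \<in> Wv Vs \<and> (\<forall>q\<in>Wv Vs. length q < length p \<longrightarrow> Dv Vs p q)"
definition Adjv :: "pview set \<Rightarrow> nat list \<Rightarrow> nat list \<Rightarrow> bool" where
  "Adjv Vs p q \<longleftrightarrow> Dv Vs p q \<and> length p \<le> length q \<and> (\<exists>j. p @ [j] \<in> Wv Vs \<and> \<not> Dv Vs (p @ [j]) q)"

lemma reach_refl: "reach E k u u"
  by (induction k) auto

lemma reach_mono: "reach E k u v \<Longrightarrow> k \<le> m \<Longrightarrow> reach E m u v"
  by (induction m) (auto simp: le_Suc_eq)

locale pg =
  fixes V :: "'a set" and E :: "'a \<Rightarrow> 'a \<Rightarrow> bool" and \<pi> :: "'a \<Rightarrow> 'a \<Rightarrow> nat"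
    and u :: 'a and d :: nat and F :: "'a set set"
  assumes fg: "finite_graph V E" and pn: "port_numbering V E \<pi>" and uV: "u \<in> V"
    and d1: "d \<ge> 1"
    and Fsub: "\<forall>S\<in>F. S \<subseteq> hop_nodes E u d - {u}"
    and Fsing: "\<forall>v\<in>hop_nodes E u d - {u}. {v} \<in> F"
begin

abbreviation "Vs \<equiv> (\<lambda>S. tau E \<pi> S d u) ` F"
abbreviation "vw \<equiv> valid E \<pi> u"
abbreviation "we \<equiv> wend E \<pi> u"
abbreviation "st S \<equiv> stat E \<pi> S d u"

lemma Esym: "E v w \<Longrightarrow> E w v" using fg unfolding finite_graph_def by blast
lemma Eirr: "\<not> E v v" using fg unfolding finite_graph_def by blast
lemma EV: "E v w \<Longrightarrow> v \<in> V \<and> w \<in> V" using fg unfolding finite_graph_def by blast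

lemma port1: assumes "E x w" shows "1 \<le> \<pi> x w \<and> \<pi> x w \<le> deg E x \<and> port_nbr E \<pi> x (\<pi> x w) = w"
proof -
  have xV: "x \<in> V" using EV assms by blast
  have b: "bij_betw (\<pi> x) (nbrs E x) {1..deg E x}" using pn xV unfolding port_numbering_def by blast
  have wn: "w \<in> nbrs E x" using assms by (simp add: nbrs_def)
  have r: "\<pi> x w \<in> {1..deg E x}" using b wn bij_betwE by blast
  have "(THE w'. E x w' \<and> \<pi> x w' = \<pi> x w) = w"
  proof (rule the_equality)
    show "E x w \<and> \<pi> x w = \<pi> x w" using assms by simp
    fix w' assume "E x w' \<and> \<pi> x w' = \<pi> x w"
    then show "w' = w" using b wn unfolding bij_betw_def inj_on_def nbrs_def by auto
  qed
  then show ?thesis using r by (simp add: port_nbr_def)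
qed

lemma port2: assumes "1 \<le> j" "j \<le> deg E x" shows "E x (port_nbr E \<pi> x j)"
proof -
  have "nbrs E x \<noteq> {}" using assms unfolding deg_def by auto
  then obtain w0 where "E x w0" unfolding nbrs_def by auto
  then have xV: "x \<in> V" using EV by blast
  have b: "bij_betw (\<pi> x) (nbrs E x) {1..deg E x}" using pn xV unfolding port_numbering_def by blast
  have "j \<in> \<pi> x ` nbrs E x" using b assms by (simp add: bij_betw_def)
  then obtain w where "w \<in> nbrs E x" "\<pi> x w = j" by blast
  then have "E x w" "\<pi> x w = j" by (auto simp: nbrs_def)
  then show ?thesis using port1[OF \<open>E x w\<close>] by simp
qed

lemma reach_walk: "reach E k u v \<longleftrightarrow> (\<exists>p. vw p \<and> length p \<le> k \<and> we p = v)"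
proof (induction k arbitrary: v)
  case 0
  show ?case
  proof
    assume "reach E 0 u v" then show "\<exists>p. vw p \<and> length p \<le> 0 \<and> we p = v"
      by (intro exI[of _ "[]"]) auto
  next
    assume "\<exists>p. vw p \<and> length p \<le> 0 \<and> we p = v" then show "reach E 0 u v" by auto
  qed
next
  case (Suc k)
  show ?case
  proof
    assume "reach E (Suc k) u v"
    then consider "reach E k u v" | w where "reach E k u w" "E w v" by auto
    then show "\<exists>p. vw p \<and> length p \<le> Suc k \<and> we p = v"
    proof cases
      case 1 then show ?thesis using Suc.IH by force
    next
      case 2
      then obtain p where p: "vw p" "length p \<le> k" "we p = w" using Suc.IH by blast
      have "vw (p @ [\<pi> w v]) \<and> we (p @ [\<pi> w v]) = v"
        using port1[OF 2(2)] p by (simp add: valid_snoc wend_snoc)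
      then show ?thesis using p(2) by (intro exI[of _ "p @ [\<pi> w v]"]) auto
    qed
  next
    assume "\<exists>p. vw p \<and> length p \<le> Suc k \<and> we p = v"
    then obtain p where p: "vw p" "length p \<le> Suc k" "we p = v" by blast
    show "reach E (Suc k) u v"
    proof (cases "length p \<le> k")
      case True then show ?thesis using Suc.IH p by auto
    next
      case False
      then have "p \<noteq> []" by auto
      then obtain q j where q: "p = q @ [j]" using rev_exhaust by blast
      have "length q \<le> k" using q p(2) by simp
      moreover have "vw q" "1 \<le> j" "j \<le> deg E (we q)" using p(1) q by (auto simp: valid_snoc)
      ultimately have "reach E k u (we q)" "E (we q) v" using Suc.IH port2 p(3) q
        by (auto simp: wend_snoc)
      then show ?thesis by auto
    qed
  qed
qed

lemma hop_walk: "v \<in> hop_nodes E u d \<longleftrightarrow> (\<exists>p. vw p \<and> length p \<le> d \<and> we p = v)"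
  by (simp add: hop_nodes_def reach_walk)

definition geo :: "nat list \<Rightarrow> bool" where
  "geo p \<longleftrightarrow> vw p \<and> (\<forall>q. vw q \<and> we q = we p \<longrightarrow> length p \<le> length q)"

lemma geo_ex: assumes "vw p" shows "\<exists>q. geo q \<and> we q = we p \<and> length q \<le> length p"
proof -
  define P where "P = (\<lambda>n. \<exists>q. vw q \<and> we q = we p \<and> length q = n)"
  have Pp: "P (length p)" using assms unfolding P_def by blast
  define n where "n = (LEAST n. P n)"
  have Pn: "P n" unfolding n_def using Pp by (rule LeastI)
  have nle: "n \<le> length p" unfolding n_def using Pp by (rule Least_le)
  obtain q where q: "vw q" "we q = we p" "length q = n" using Pn unfolding P_def by blast
  have "geo q" unfolding geo_def
  proof (intro conjI allI impI)
    show "vw q" by fact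
    fix r assume r: "vw r \<and> we r = we q"
    then have "P (length r)" unfolding P_def using q by auto
    then have "n \<le> length r" unfolding n_def by (rule Least_le)
    then show "length q \<le> length r" using q by simp
  qed
  then show ?thesis using q nle by auto
qed

lemma geo_inter: assumes "geo q" "vw p" "i \<le> length p" "we (take i p) = we q" shows "length q \<le> i"
proof -
  have "vw (take i p)" using valid_take[OF assms(2)] by blast
  then have "length q \<le> length (take i p)" using assms(1,4) unfolding geo_def by blast
  then show ?thesis using assms(3) by simp
qed

lemma geo_nil: "geo []" by (simp add: geo_def)

lemma uS: "S \<in> F \<Longrightarrow> u \<notin> S" using Fsub by blast

lemma L2': "S \<in> F \<Longrightarrow> st S p \<noteq> NoP \<Longrightarrow> (st S p = BotP \<longleftrightarrow> we p \<in> S)"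
  using L2[of E \<pi> S d u p] uS by (cases p) auto

lemma noD: "we p = we q \<Longrightarrow> S \<in> F \<Longrightarrow> \<not> ((st S p = BotP \<and> st S q = MsgP))"
  using L2'[of S p] L2'[of S q] by auto

lemma Wv_eq: "Wv Vs = {p. \<exists>S\<in>F. st S p \<noteq> NoP}"
  by (auto simp: Wv_def atv_tau)

lemma Dv_eq: "Dv Vs p q \<longleftrightarrow> (\<exists>S\<in>F. (st S p = BotP \<and> st S q = MsgP) \<or> (st S q = BotP \<and> st S p = MsgP))"
  by (auto simp: Dv_def atv_tau)

lemma noDv: "we p = we q \<Longrightarrow> \<not> Dv Vs p q"
  unfolding Dv_eq using noD by metis

lemma Dv_sym: "Dv Vs p q \<longleftrightarrow> Dv Vs q p" unfolding Dv_eq by blast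

lemma W_valid: assumes "p \<in> Wv Vs" shows "vw p \<and> length p \<le> d"
proof -
  obtain S where "st S p \<noteq> NoP" using assms unfolding Wv_eq by blast
  then show ?thesis by (rule L1)
qed

lemma bot_lem: assumes "vw p" "length p \<le> d" "p \<noteq> []"
   "\<forall>i. 0 < i \<and> i < length p \<longrightarrow> we (take i p) \<noteq> we p" shows "st {we p} p = BotP"
proof -
  have "\<forall>i. 0 < i \<and> i < length p \<longrightarrow> we (take i p) \<notin> {we p}" using assms(4) by simp
  then have "st {we p} p \<noteq> NoP" using L3[of E \<pi> u p d "{we p}"] assms(1,2) by blast
  then show ?thesis using L2[of E \<pi> "{we p}" d u p] assms(3) by simp
qed

lemma msg_lem: assumes "vw p" "length p \<le> d"
   "\<forall>i. 0 < i \<and> i < length p \<longrightarrow> we (take i p) \<noteq> w" "we p \<noteq> w" shows "st {w} p = MsgP"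
proof (cases "p = []")
  case True then show ?thesis by simp
next
  case False
  have "\<forall>i. 0 < i \<and> i < length p \<longrightarrow> we (take i p) \<notin> {w}" using assms(3) by simp
  then have "st {w} p \<noteq> NoP" using L3[of E \<pi> u p d "{w}"] assms(1,2) by blast
  moreover have "st {w} p \<noteq> BotP" using L2[of E \<pi> "{w}" d u p] calculation False assms(4) by simp
  ultimately show ?thesis using stat_cases[of E \<pi> "{w}" d u p] by blast
qed

lemma sing_in: "geo p \<Longrightarrow> length p \<le> d \<Longrightarrow> p \<noteq> [] \<Longrightarrow> {we p} \<in> F"
proof -
  assume a: "geo p" "length p \<le> d" "p \<noteq> []"
  have "vw p" using a(1) by (simp add: geo_def)
  then have "we p \<in> hop_nodes E u d" unfolding hop_walk using a(2) by blast
  moreover have "we p \<noteq> u"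
  proof
    assume "we p = u"
    then have "vw [] \<and> we [] = we p" by simp
    then have "length p \<le> length ([]::nat list)" using a(1) unfolding geo_def by blast
    then show False using a(3) by simp
  qed
  ultimately show ?thesis using Fsing by blast
qed

lemma geo_bot: assumes "geo p" "length p \<le> d" "p \<noteq> []" shows "st {we p} p = BotP"
proof (rule bot_lem[OF _ assms(2) assms(3)])
  show "vw p" using assms(1) by (simp add: geo_def)
  show "\<forall>i. 0 < i \<and> i < length p \<longrightarrow> we (take i p) \<noteq> we p"
  proof (intro allI impI)
    fix i assume i: "0 < i \<and> i < length p"
    show "we (take i p) \<noteq> we p"
    proof
      assume "we (take i p) = we p"
      moreover have "i \<le> length p" using i by simp
      ultimately have "length p \<le> i" using geo_inter[OF assms(1) \<open>vw p\<close>] by blast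
      then show False using i by simp
    qed
  qed
qed

lemma geo_W: assumes "F \<noteq> {}" "geo p" "length p \<le> d" shows "p \<in> Wv Vs"
proof (cases "p = []")
  case True
  obtain S where "S \<in> F" using assms(1) by blast
  moreover have "st S p \<noteq> NoP" using True by simp
  ultimately show ?thesis unfolding Wv_eq by blast
next
  case False
  have "{we p} \<in> F" using sing_in assms False by blast
  moreover have "st {we p} p \<noteq> NoP" using geo_bot assms False by simp
  ultimately show ?thesis unfolding Wv_eq by blast
qed

lemma C1: assumes "F \<noteq> {}" shows "Geov Vs p \<longleftrightarrow> geo p \<and> length p \<le> d"
proof
  assume g: "Geov Vs p"
  then have pW: "p \<in> Wv Vs" by (simp add: Geov_def)
  then have vp: "vw p" "length p \<le> d" using W_valid by auto
  have "geo p" unfolding geo_def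
  proof (intro conjI allI impI)
    show "vw p" by fact
    fix q assume q: "vw q \<and> we q = we p"
    show "length p \<le> length q"
    proof (rule ccontr)
      assume "\<not> length p \<le> length q"
      obtain q' where q': "geo q'" "we q' = we q" "length q' \<le> length q" using geo_ex q by blast
      have "q' \<in> Wv Vs" using geo_W[OF assms q'(1)] q' vp \<open>\<not> length p \<le> length q\<close> by simp
      then have "Dv Vs p q'" using g q' \<open>\<not> length p \<le> length q\<close> unfolding Geov_def by simp
      then show False using noDv q q' by metis
    qed
  qed
  then show "geo p \<and> length p \<le> d" using vp by simp
next
  assume a: "geo p \<and> length p \<le> d"
  show "Geov Vs p" unfolding Geov_def
  proof (intro conjI ballI impI)
    show "p \<in> Wv Vs" using geo_W assms a by blast
    fix q assume q: "q \<in> Wv Vs" "length q < length p"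
    have vq: "vw q" "length q \<le> d" using W_valid q by auto
    have pn: "p \<noteq> []" using q by auto
    have b: "st {we p} p = BotP" using geo_bot a pn by blast
    have m: "st {we p} q = MsgP"
    proof (rule msg_lem[OF vq])
      show "\<forall>i. 0 < i \<and> i < length q \<longrightarrow> we (take i q) \<noteq> we p"
      proof (intro allI impI)
        fix i assume i: "0 < i \<and> i < length q"
        show "we (take i q) \<noteq> we p"
        proof
          assume "we (take i q) = we p"
          then have "length p \<le> i" using geo_inter[of p q i] a vq i by simp
          then show False using i q(2) by simp
        qed
      qed
      show "we q \<noteq> we p"
      proof
        assume "we q = we p"
        then have "length p \<le> length q" using a vq unfolding geo_def by blast
        then show False using q(2) by simp
      qed
    qed
    have "{we p} \<in> F" using sing_in a pn by blast
    then show "Dv Vs p q" unfolding Dv_eq using b m by blast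
  qed
qed

lemma C2a: assumes "geo p" "geo q" "length p \<le> length q" "length q \<le> d" "we p \<noteq> we q"
  shows "Dv Vs p q"
proof -
  have qn: "q \<noteq> []"
  proof
    assume "q = []"
    then have "p = []" using assms(3) by simp
    then show False using \<open>q = []\<close> assms(5) by simp
  qed
  have b: "st {we q} q = BotP" using geo_bot assms qn by blast
  have m: "st {we q} p = MsgP"
  proof (rule msg_lem)
    show "vw p" "length p \<le> d" using assms by (auto simp: geo_def)
    show "\<forall>i. 0 < i \<and> i < length p \<longrightarrow> we (take i p) \<noteq> we q"
    proof (intro allI impI)
      fix i assume i: "0 < i \<and> i < length p"
      show "we (take i p) \<noteq> we q"
      proof
        assume "we (take i p) = we q"
        then have "length q \<le> i" using geo_inter[of q p i] assms i by (simp add: geo_def)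
        then show False using i assms(3) by simp
      qed
    qed
    show "we p \<noteq> we q" by fact
  qed
  have "{we q} \<in> F" using sing_in assms qn by blast
  then show ?thesis unfolding Dv_eq using b m by blast
qed

lemma C2: assumes "geo p" "geo q" "length p \<le> d" "length q \<le> d"
  shows "\<not> Dv Vs p q \<longleftrightarrow> we p = we q"
proof
  assume nd: "\<not> Dv Vs p q"
  show "we p = we q"
  proof (rule ccontr)
    assume ne: "we p \<noteq> we q"
    show False
    proof (cases "length p \<le> length q")
      case True
      then show False using C2a[OF assms(1,2) True assms(4) ne] nd by simp
    next
      case False
      then have "Dv Vs q p" using C2a[OF assms(2,1) _ assms(3)] ne by simp
      then show False using nd Dv_sym by simp
    qed
  qed
next
  assume "we p = we q" then show "\<not> Dv Vs p q" by (rule noDv)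
qed

end


context pg begin

lemma we_snoc_take: "i \<le> length p \<Longrightarrow> take i (p @ [j]) = take i p" by simp

lemma hop_edge_sym: "hop_edge E u d v w \<Longrightarrow> hop_edge E u d w v"
  unfolding hop_edge_def using Esym by blast

lemma walk_reach: "vw p \<Longrightarrow> length p \<le> k \<Longrightarrow> reach E k u (we p)"
  using reach_walk by blast

lemma geo_not_atd: assumes "geo p" "length p < d" shows "\<not> at_dist E u d (we p)"
proof -
  have "vw p" using assms(1) by (simp add: geo_def)
  then have "reach E (d - 1) u (we p)" using walk_reach assms(2) by simp
  then show ?thesis unfolding at_dist_def using d1 by simp
qed

lemma geo_atd: assumes "geo p" "length p = d" shows "at_dist E u d (we p)"
proof -
  have vp: "vw p" using assms(1) by (simp add: geo_def)
  then have "reach E d u (we p)" using walk_reach assms(2) by simp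
  moreover have "\<not> reach E (d - 1) u (we p)"
  proof
    assume "reach E (d - 1) u (we p)"
    then obtain r where r: "vw r" "length r \<le> d - 1" "we r = we p" using reach_walk by blast
    then have "length p \<le> length r" using assms(1) unfolding geo_def by blast
    then show False using r(2) assms(2) d1 by simp
  qed
  ultimately show ?thesis unfolding at_dist_def by simp
qed

lemma inter_ne: assumes "geo p" "geo q" "length p \<le> length q" "we p \<noteq> we q"
  shows "\<forall>i. 0 < i \<and> i < length (p @ [j]) \<longrightarrow> we (take i (p @ [j])) \<noteq> we q"
proof (intro allI impI)
  fix i assume i: "0 < i \<and> i < length (p @ [j])"
  then have il: "i \<le> length p" by simp
  have vp: "vw p" using assms(1) by (simp add: geo_def)
  show "we (take i (p @ [j])) \<noteq> we q"
  proof
    assume "we (take i (p @ [j])) = we q"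
    then have "we (take i p) = we q" using il by simp
    moreover from this have "length q \<le> i" using geo_inter[OF assms(2) vp il] by blast
    ultimately have "we p = we q" using il assms(3) by simp
    then show False using assms(4) by simp
  qed
qed

lemma q_nonnil: assumes "length p \<le> length q" "we p \<noteq> we q" shows "q \<noteq> []"
proof
  assume "q = []" then have "p = []" using assms(1) by simp
  then show False using \<open>q = []\<close> assms(2) by simp
qed

lemma C3a: assumes "geo p" "geo q" "length p \<le> d" "length q \<le> d" "Adjv Vs p q"
  shows "hop_edge E u d (we p) (we q)"
proof -
  have D: "Dv Vs p q" and le: "length p \<le> length q" using assms(5) by (auto simp: Adjv_def)
  obtain j where j: "p @ [j] \<in> Wv Vs" "\<not> Dv Vs (p @ [j]) q" using assms(5) by (auto simp: Adjv_def)
  have ne: "we p \<noteq> we q" using D noDv by blast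
  have vj: "vw (p @ [j])" "length (p @ [j]) \<le> d" using W_valid[OF j(1)] by auto
  then have jr: "1 \<le> j" "j \<le> deg E (we p)" by (auto simp: valid_snoc)
  have Ec: "E (we p) (we (p @ [j]))" using port2[OF jr] by (simp add: wend_snoc)
  have qn: "q \<noteq> []" using q_nonnil le ne by blast
  have c: "we (p @ [j]) = we q"
  proof (rule ccontr)
    assume cne: "we (p @ [j]) \<noteq> we q"
    have S: "{we q} \<in> F" using sing_in assms(2,4) qn by blast
    have b: "st {we q} q = BotP" using geo_bot assms(2,4) qn by blast
    have m: "st {we q} (p @ [j]) = MsgP"
      using msg_lem[OF vj inter_ne[OF assms(1,2) le ne] cne] .
    have "Dv Vs (p @ [j]) q" unfolding Dv_eq using S b m by blast
    then show False using j(2) by simp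
  qed
  have hp: "we p \<in> hop_nodes E u d" "we q \<in> hop_nodes E u d"
    using assms unfolding hop_walk geo_def by blast+
  have "\<not> at_dist E u d (we p)" using geo_not_atd assms(1) vj(2) by simp
  then show ?thesis unfolding hop_edge_def using Ec c hp by simp
qed

lemma C3b: assumes "geo p" "geo q" "length p \<le> length q" "length q \<le> d"
   "hop_edge E u d (we p) (we q)"
  shows "Adjv Vs p q"
proof -
  have E: "E (we p) (we q)" using assms(5) by (simp add: hop_edge_def)
  have ne: "we p \<noteq> we q" using E Eirr by metis
  have D: "Dv Vs p q" using C2a[OF assms(1,2,3,4) ne] .
  let ?j = "\<pi> (we p) (we q)"
  have pj: "1 \<le> ?j" "?j \<le> deg E (we p)" "port_nbr E \<pi> (we p) ?j = we q" using port1[OF E] by auto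
  have vp: "vw p" using assms(1) by (simp add: geo_def)
  have lt: "length p < d"
  proof (rule ccontr)
    assume "\<not> length p < d"
    then have "length p = d" "length q = d" using assms(3,4) by auto
    then have "at_dist E u d (we p)" "at_dist E u d (we q)" using geo_atd assms(1,2) by auto
    then show False using assms(5) by (simp add: hop_edge_def)
  qed
  have vj: "vw (p @ [?j])" using vp pj by (simp add: valid_snoc)
  have ej: "we (p @ [?j]) = we q" using pj by (simp add: wend_snoc)
  have qn: "q \<noteq> []" using q_nonnil assms(3) ne by blast
  have S: "{we q} \<in> F" using sing_in assms(2,4) qn by blast
  have "\<forall>i. 0 < i \<and> i < length (p @ [?j]) \<longrightarrow> we (take i (p @ [?j])) \<notin> {we q}"
    using inter_ne[OF assms(1,2,3) ne] by simp
  then have "st {we q} (p @ [?j]) \<noteq> NoP" using L3[of E \<pi> u "p @ [?j]" d "{we q}"] vj lt by simp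
  then have W: "p @ [?j] \<in> Wv Vs" unfolding Wv_eq using S by blast
  have "\<not> Dv Vs (p @ [?j]) q" using noDv ej by blast
  then show ?thesis unfolding Adjv_def using D assms(3) W by auto
qed

lemma C3: assumes "geo p" "geo q" "length p \<le> d" "length q \<le> d"
  shows "hop_edge E u d (we p) (we q) \<longleftrightarrow> Adjv Vs p q \<or> Adjv Vs q p"
proof
  assume h: "hop_edge E u d (we p) (we q)"
  show "Adjv Vs p q \<or> Adjv Vs q p"
  proof (cases "length p \<le> length q")
    case True then show ?thesis using C3b[OF assms(1,2) True assms(4) h] by simp
  next
    case False
    then have "length q \<le> length p" by simp
    then show ?thesis using C3b[OF assms(2,1) _ assms(3) hop_edge_sym[OF h]] by simp
  qed
next
  assume "Adjv Vs p q \<or> Adjv Vs q p"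
  then show "hop_edge E u d (we p) (we q)"
  proof
    assume "Adjv Vs p q" then show ?thesis by (rule C3a[OF assms])
  next
    assume "Adjv Vs q p" then show ?thesis using C3a[OF assms(2,1,4,3)] hop_edge_sym by simp
  qed
qed

lemma C4: "hop_nodes E u d = we ` {p. geo p \<and> length p \<le> d}"
proof
  show "hop_nodes E u d \<subseteq> we ` {p. geo p \<and> length p \<le> d}"
  proof
    fix v assume "v \<in> hop_nodes E u d"
    then obtain p where p: "vw p" "length p \<le> d" "we p = v" unfolding hop_walk by blast
    obtain q where "geo q" "we q = we p" "length q \<le> length p" using geo_ex[OF p(1)] by blast
    then have "q \<in> {p. geo p \<and> length p \<le> d}" "v = we q" using p by auto
    then show "v \<in> we ` {p. geo p \<and> length p \<le> d}" by blast
  qed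
next
  show "we ` {p. geo p \<and> length p \<le> d} \<subseteq> hop_nodes E u d"
  proof
    fix v assume "v \<in> we ` {p. geo p \<and> length p \<le> d}"
    then obtain p where "geo p" "length p \<le> d" "v = we p" by blast
    then have "vw p" "length p \<le> d" "we p = v" by (auto simp: geo_def)
    then show "v \<in> hop_nodes E u d" unfolding hop_walk by blast
  qed
qed

lemma Geo_set: "F \<noteq> {} \<Longrightarrow> {p. geo p \<and> length p \<le> d} = {p. Geov Vs p}"
  using C1 by blast

end

lemma iso_common:
  assumes "V1 = ea ` P" "V2 = eb ` P" "xz \<in> P" "r1 = ea xz" "r2 = eb xz"
    and "\<forall>p\<in>P. \<forall>q\<in>P. ea p = ea q \<longleftrightarrow> R p q"
    and "\<forall>p\<in>P. \<forall>q\<in>P. eb p = eb q \<longleftrightarrow> R p q"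
    and "\<forall>p\<in>P. \<forall>q\<in>P. E1 (ea p) (ea q) \<longleftrightarrow> A p q"
    and "\<forall>p\<in>P. \<forall>q\<in>P. E2 (eb p) (eb q) \<longleftrightarrow> A p q"
  shows "rooted_iso V1 E1 r1 V2 E2 r2"
proof -
  define f where "f = (\<lambda>v. eb (inv_into P ea v))"
  have fe: "f (ea p) = eb p" if "p \<in> P" for p
  proof -
    have i: "inv_into P ea (ea p) \<in> P" "ea (inv_into P ea (ea p)) = ea p"
      using that by (auto intro: inv_into_into f_inv_into_f)
    then have "R (inv_into P ea (ea p)) p" using assms(6) that by blast
    then have "eb (inv_into P ea (ea p)) = eb p" using assms(7) i(1) that by blast
    then show ?thesis by (simp add: f_def)
  qed
  have inj: "inj_on f V1"
  proof (rule inj_onI)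
    fix x y assume "x \<in> V1" "y \<in> V1" "f x = f y"
    then obtain p q where pq: "p \<in> P" "q \<in> P" "x = ea p" "y = ea q" using assms(1) by blast
    then have "eb p = eb q" using fe \<open>f x = f y\<close> by simp
    then show "x = y" using assms(6,7) pq by blast
  qed
  have img: "f ` V1 = V2"
  proof
    show "f ` V1 \<subseteq> V2" using assms(1,2) fe by auto
    show "V2 \<subseteq> f ` V1"
    proof
      fix y assume "y \<in> V2"
      then obtain p where p: "p \<in> P" "y = eb p" using assms(2) by blast
      then have "y = f (ea p)" "ea p \<in> V1" using fe assms(1) by auto
      then show "y \<in> f ` V1" by blast
    qed
  qed
  have "\<forall>v\<in>V1. \<forall>w\<in>V1. E1 v w \<longleftrightarrow> E2 (f v) (f w)"
  proof (intro ballI)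
    fix v w assume "v \<in> V1" "w \<in> V1"
    then obtain p q where pq: "p \<in> P" "q \<in> P" "v = ea p" "w = ea q" using assms(1) by blast
    then show "E1 v w \<longleftrightarrow> E2 (f v) (f w)" using fe assms(8,9) by simp
  qed
  moreover have "f r1 = r2" using fe assms(3,4,5) by simp
  ultimately show ?thesis unfolding rooted_iso_def bij_betw_def using inj img by (intro exI[of _ f]) simp
qed



theorem theorem4:
  fixes V1 :: "'a set" and E1 :: "'a \<Rightarrow> 'a \<Rightarrow> bool" and \<pi>1 :: "'a \<Rightarrow> 'a \<Rightarrow> nat"
    and V2 :: "'b set" and E2 :: "'b \<Rightarrow> 'b \<Rightarrow> bool" and \<pi>2 :: "'b \<Rightarrow> 'b \<Rightarrow> nat"
    and u1 :: 'a and u2 :: 'b and d :: nat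
    and F1 :: "'a set set" and F2 :: "'b set set"
  assumes "d \<ge> 1"
    and "finite_graph V1 E1" and "port_numbering V1 E1 \<pi>1" and "u1 \<in> V1"
    and "finite_graph V2 E2" and "port_numbering V2 E2 \<pi>2" and "u2 \<in> V2"
    and "\<forall>S\<in>F1. S \<subseteq> hop_nodes E1 u1 d - {u1}"
    and "\<forall>v\<in>hop_nodes E1 u1 d - {u1}. {v} \<in> F1"
    and "\<forall>S\<in>F2. S \<subseteq> hop_nodes E2 u2 d - {u2}"
    and "\<forall>v\<in>hop_nodes E2 u2 d - {u2}. {v} \<in> F2"
    and "\<not> rooted_iso (hop_nodes E1 u1 d) (hop_edge E1 u1 d) u1
                     (hop_nodes E2 u2 d) (hop_edge E2 u2 d) u2"
  shows "(\<lambda>S. tau E1 \<pi>1 S d u1) ` F1 \<noteq> (\<lambda>S. tau E2 \<pi>2 S d u2) ` F2"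
proof
  interpret A: pg V1 E1 \<pi>1 u1 d F1 using assms by unfold_locales auto
  interpret B: pg V2 E2 \<pi>2 u2 d F2 using assms by unfold_locales auto
  assume eq: "(\<lambda>S. tau E1 \<pi>1 S d u1) ` F1 = (\<lambda>S. tau E2 \<pi>2 S d u2) ` F2"
  have iso: "rooted_iso (hop_nodes E1 u1 d) (hop_edge E1 u1 d) u1
                     (hop_nodes E2 u2 d) (hop_edge E2 u2 d) u2"
  proof (cases "F1 = {}")
    case True
    then have F2: "F2 = {}" using eq by simp
    have h1: "hop_nodes E1 u1 d = {u1}"
      using assms(9) True reach_refl[of E1 d u1] by (auto simp: hop_nodes_def)
    have h2: "hop_nodes E2 u2 d = {u2}"
      using assms(11) F2 reach_refl[of E2 d u2] by (auto simp: hop_nodes_def)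
    show ?thesis unfolding h1 h2 rooted_iso_def
      by (intro exI[of _ "\<lambda>_. u2"]) (auto simp: hop_edge_def A.Eirr B.Eirr bij_betw_def)
  next
    case False
    then have F2: "F2 \<noteq> {}" using eq by auto
    let ?V = "(\<lambda>S. tau E1 \<pi>1 S d u1) ` F1"
    let ?P = "{p. Geov ?V p}"
    show ?thesis
    proof (rule iso_common[where P = ?P and ea = "wend E1 \<pi>1 u1" and eb = "wend E2 \<pi>2 u2"
          and xz = "[]" and R = "\<lambda>p q. \<not> Dv ?V p q" and A = "\<lambda>p q. Adjv ?V p q \<or> Adjv ?V q p"])
      show "hop_nodes E1 u1 d = wend E1 \<pi>1 u1 ` ?P" using A.C4 A.Geo_set[OF False] by simp
      show "hop_nodes E2 u2 d = wend E2 \<pi>2 u2 ` ?P" using B.C4 B.Geo_set[OF F2] eq by simp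
      show "[] \<in> ?P" using A.C1[OF False] A.geo_nil by simp
      show "u1 = wend E1 \<pi>1 u1 []" by simp
      show "u2 = wend E2 \<pi>2 u2 []" by simp
      show "\<forall>p\<in>?P. \<forall>q\<in>?P. (wend E1 \<pi>1 u1 p = wend E1 \<pi>1 u1 q) = (\<not> Dv ?V p q)"
        using A.C1[OF False] A.C2 by simp
      show "\<forall>p\<in>?P. \<forall>q\<in>?P. (wend E2 \<pi>2 u2 p = wend E2 \<pi>2 u2 q) = (\<not> Dv ?V p q)"
        using B.C1[OF F2] B.C2 eq by simp
      show "\<forall>p\<in>?P. \<forall>q\<in>?P. hop_edge E1 u1 d (wend E1 \<pi>1 u1 p) (wend E1 \<pi>1 u1 q) =
              (Adjv ?V p q \<or> Adjv ?V q p)"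
        using A.C1[OF False] A.C3 by simp
      show "\<forall>p\<in>?P. \<forall>q\<in>?P. hop_edge E2 u2 d (wend E2 \<pi>2 u2 p) (wend E2 \<pi>2 u2 q) =
              (Adjv ?V p q \<or> Adjv ?V q p)"
        using B.C1[OF F2] B.C3 eq by simp
    qed
  qed
  then show False using assms(12) by simp
qed

end
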